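(* Let $k,d,b,\tilde b\ge0$ be measurable on $\mathbb{R}_+$ with $\int_0^{+\infty}k=\int_0^{+\infty}d=+\infty$ and $1<\int_0^{+\infty}\big(b(a)e^{-\int_0^ak}+\tilde b(a)e^{-\int_0^ad}\big)da<+\infty$. Let the competition functions be linear: $\eta(N_1,N_2)=\eta_1N_1+\eta_2N_2$, $c(N_1,N_2)=c_1N_1+c_2N_2$, $\tilde c(N_1,N_2)=\tilde c_1N_1+\tilde c_2N_2$ with nonnegative coefficients, and put $c_1^{tot}=\eta_1+c_1$, $c_2^{tot}=\eta_2+c_2$, $c_{tot}=c+\eta$. Assume $c_1^{tot}>0$, $\tilde c_2>0$ and $c_1^{tot}\ge c_2^{tot}$. Then every nonnegative solution $(N_1^*,N_2^* )$ of $$\int_0^{+\infty}\tilde b(a)e^{-\int_0^ad-\tilde c(N_1,N_2)a}da\cdot\int_0^{+\infty}\big(k(a)+\eta(N_1,N_2)\big)e^{-\int_0^ak-c_{tot}(N_1,N_2)a}da+\int_0^{+\infty}b(a)e^{-\int_0^ak-c_{tot}(N_1,N_2)a}da=1,$$ $$N_1\int_0^{+\infty}e^{-\int_0^ad-\tilde c(N_1,N_2)a}da\cdot\int_0^{+\infty}\big(k(a)+\eta(N_1,N_2)\big)e^{-\int_0^ak-c_{tot}(N_1,N_2)a}da-N_2\int_0^{+\infty}e^{-\int_0^ak-c_{tot}(N_1,N_2)a}da=0$$ satisfies $N_1^*+N_2^*\ge N^*$, where $N^*=\mu_0/c_1^{tot}$ if $\int_0^{+\infty}b(a)e^{-\int_0^ak}da>1$,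 with $\mu_0>0$ the unique solution of $\int_0^{+\infty}b(a)e^{-\int_0^ak(u)du-\mu_0a}da=1$, and $N^*=0$ otherwise.
   Context: $N^*$ is the total steady-state population of the one-phase model $\partial_tn+\partial_an=-(k(a)+c_{tot}(N(t),0))n$, $n(t,0)=\int bn$. *)

theory Defs
  imports "HOL-Analysis.Analysis"
begin

definition cum :: "(real \<Rightarrow> real) \<Rightarrow> real \<Rightarrow> ennreal" where
  "cum f a = (\<integral>\<^sup>+ u. ennreal (f u) * indicator {0..a} u \<partial>lborel)"

text \<open>\<open>exp(-\<int>_0^a f)\<close>, with the convention \<open>exp(-\<infinity>) = 0\<close>.\<close>
definition surv :: "(real \<Rightarrow> real) \<Rightarrow> real \<Rightarrow> real" where
  "surv f a = (if cum f a = \<infinity> then 0 else exp (- enn2real (cum f a)))"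

definition I0 :: "(real \<Rightarrow> real) \<Rightarrow> ennreal" where
  "I0 g = (\<integral>\<^sup>+ a. ennreal (g a) * indicator {0..} a \<partial>lborel)"

definition Nstar :: "(real \<Rightarrow> real) \<Rightarrow> (real \<Rightarrow> real) \<Rightarrow> real \<Rightarrow> real" where
  "Nstar k b c1tot =
     (if I0 (\<lambda>a. b a * surv k a) > 1
      then (THE \<mu>0. \<mu>0 > 0 \<and> I0 (\<lambda>a. b a * surv k a * exp (- \<mu>0 * a)) = 1) / c1tot
      else 0)"

end

theory Submission
  imports Defs
begin

lemma ennreal_sum_le1: "(a::ennreal) + c = 1 \<Longrightarrow> c \<le> 1"
  by (metis add.commute le_iff_add)

lemma cum_mono: "x \<le> y \<Longrightarrow> cum f x \<le> cum f y"
  unfolding cum_def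
  by (intro nn_integral_mono) (auto simp: indicator_def)

lemma surv_nonneg: "0 \<le> surv f a"
  by (simp add: surv_def)

lemma surv_antimono:
  assumes "x \<le> y" shows "surv f y \<le> surv f x"
proof -
  have c: "cum f x \<le> cum f y" using cum_mono[OF assms] .
  show ?thesis
  proof (cases "cum f y = \<infinity>")
    case True then show ?thesis by (simp add: surv_def)
  next
    case False
    then have "cum f x \<noteq> \<infinity>" using c by (metis infinity_ennreal_def top.extremum_uniqueI)
    moreover have "enn2real (cum f x) \<le> enn2real (cum f y)"
      using c False by (simp add: enn2real_mono top.not_eq_extremum)
    ultimately show ?thesis using False by (simp add: surv_def)
  qed
qed

lemma surv_meas: "surv f \<in> borel_measurable lborel"
proof -
  have "mono (\<lambda>x. - surv f x)"
    by (auto simp: mono_def intro: surv_antimono)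
  then have "(\<lambda>x. - surv f x) \<in> borel_measurable borel"
    by (rule borel_measurable_mono)
  then have "(\<lambda>x. - (- surv f x)) \<in> borel_measurable borel"
    by measurable
  then show ?thesis by simp
qed

locale Gsetup =
  fixes h :: "real \<Rightarrow> real"
  assumes hm: "(\<lambda>a. indicator {0..} a * h a) \<in> borel_measurable lborel"
    and hnn: "\<And>a. a \<ge> 0 \<Longrightarrow> h a \<ge> 0"
    and hfin: "(\<integral>\<^sup>+ a. ennreal (h a) * indicator {0..} a \<partial>lborel) < \<infinity>"
begin

definition g :: "real \<Rightarrow> real \<Rightarrow> real" where
  "g \<mu> a = indicator {0..} a * h a * exp (- \<mu> * a)"

definition G :: "real \<Rightarrow> real" where
  "G \<mu> = (LINT a|lborel. g \<mu> a)"

lemma g_meas: "g \<mu> \<in> borel_measurable lborel"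
proof -
  have "(\<lambda>a. (indicator {0..} a * h a) * exp (- \<mu> * a)) \<in> borel_measurable lborel"
    using hm by measurable
  then show ?thesis unfolding g_def[abs_def] by simp
qed

lemma g_nonneg: "0 \<le> g \<mu> a"
  by (auto simp: g_def indicator_def hnn)

lemma g_le: "\<mu> \<ge> 0 \<Longrightarrow> g \<mu> a \<le> indicator {0..} a * h a"
  by (auto simp: g_def indicator_def hnn mult_left_le)

lemma g0: "g 0 a = indicator {0..} a * h a"
  by (simp add: g_def)

lemma int0: "integrable lborel (\<lambda>a. indicator {0..} a * h a)"
proof (rule integrableI_bounded)
  show "(\<lambda>a. indicator {0..} a * h a) \<in> borel_measurable lborel" by (rule hm)
  have "(\<integral>\<^sup>+ a. ennreal (norm (indicator {0..} a * h a)) \<partial>lborel)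
      = (\<integral>\<^sup>+ a. ennreal (h a) * indicator {0..} a \<partial>lborel)"
    by (intro nn_integral_cong) (auto simp: indicator_def hnn)
  then show "(\<integral>\<^sup>+ a. ennreal (norm (indicator {0..} a * h a)) \<partial>lborel) < \<infinity>"
    using hfin by simp
qed

lemma g_int: assumes "\<mu> \<ge> 0" shows "integrable lborel (g \<mu>)"
  using int0 g_meas
  by (rule Bochner_Integration.integrable_bound) (use assms g_nonneg[of \<mu>] in \<open>auto intro!: AE_I2 order_trans[OF g_le abs_ge_self]\<close>)

lemma I0_G: assumes "\<mu> \<ge> 0" shows "I0 (\<lambda>a. h a * exp (- \<mu> * a)) = ennreal (G \<mu>)"
proof -
  have "I0 (\<lambda>a. h a * exp (- \<mu> * a)) = (\<integral>\<^sup>+ a. ennreal (g \<mu> a) \<partial>lborel)"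
    unfolding I0_def by (intro nn_integral_cong) (auto simp: g_def indicator_def)
  also have "\<dots> = ennreal (G \<mu>)"
    unfolding G_def using g_int[OF assms] g_nonneg by (intro nn_integral_eq_integral) auto
  finally show ?thesis .
qed

lemma G_cont: "continuous_on {0..} G"
proof -
  have "continuous (at x within {0..}) G" if x: "x \<in> {0..}" for x
  proof (rule continuous_within_sequentiallyI)
    fix u :: "nat \<Rightarrow> real" assume u: "u \<longlonglongrightarrow> x" "\<forall>n. u n \<in> {0..}"
    show "(\<lambda>n. G (u n)) \<longlonglongrightarrow> G x"
      unfolding G_def
    proof (rule integral_dominated_convergence[where w = "\<lambda>a. indicator {0..} a * h a"])
      show "g x \<in> borel_measurable lborel" "\<And>i. g (u i) \<in> borel_measurable lborel"
        by (rule g_meas)+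
      show "integrable lborel (\<lambda>a. indicator {0..} a * h a)" by (rule int0)
      show "AE a in lborel. (\<lambda>i. g (u i) a) \<longlonglongrightarrow> g x a"
        unfolding g_def by (intro AE_I2 tendsto_intros u(1))
      show "AE a in lborel. norm (g (u i) a) \<le> indicator {0..} a * h a" for i
        using u(2) g_le g_nonneg by (intro AE_I2) auto
    qed
  qed
  then show ?thesis by (simp add: continuous_on_eq_continuous_within)
qed

lemma G_strict:
  assumes "0 \<le> x" "x < y" "G y \<noteq> 0"
  shows "G y < G x"
proof (rule ccontr)
  assume "\<not> G y < G x"
  have ge: "g y a \<le> g x a" for a
    using assms by (auto simp: g_def indicator_def hnn intro!: mult_left_mono mult_right_mono)
  have ix: "integrable lborel (g x)" and iy: "integrable lborel (g y)"
    using g_int assms by auto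
  have "G x - G y = (LINT a|lborel. g x a - g y a)"
    unfolding G_def using ix iy by (simp add: Bochner_Integration.integral_diff)
  moreover have "(LINT a|lborel. g x a - g y a) \<ge> 0"
    using ge by (intro integral_nonneg_AE) auto
  ultimately have "(LINT a|lborel. g x a - g y a) = 0"
    using \<open>\<not> G y < G x\<close> by linarith
  then have "AE a in lborel. g x a - g y a = 0"
    using ix iy ge by (subst (asm) integral_nonneg_eq_0_iff_AE) auto
  then have "AE a in lborel. g y a = 0"
    using AE_lborel_singleton[of 0]
  proof eventually_elim
    case (elim a)
    show ?case
    proof (cases "a > 0")
      case True
      have "exp (- y * a) < exp (- x * a)" using True assms by simp
      moreover have "h a * exp (- x * a) = h a * exp (- y * a)"
        using elim True by (simp add: g_def)
      ultimately have "h a = 0" by auto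
      then show ?thesis by (simp add: g_def)
    next
      case False
      then have "a < 0" using elim by auto
      then show ?thesis by (simp add: g_def)
    qed
  qed
  then have "G y = 0" unfolding G_def by (rule integral_eq_zero_AE)
  then show False using assms by simp
qed

end

theorem corollary1:
  fixes k d b bt :: "real \<Rightarrow> real"
    and \<eta>1 \<eta>2 c1 c2 ct1 ct2 N1 N2 :: real
  assumes meas: "set_borel_measurable lborel {0..} k" "set_borel_measurable lborel {0..} d"
      "set_borel_measurable lborel {0..} b" "set_borel_measurable lborel {0..} bt"
    and nonneg: "\<forall>a\<ge>0. k a \<ge> 0 \<and> d a \<ge> 0 \<and> b a \<ge> 0 \<and> bt a \<ge> 0"
    and k_inf: "I0 k = \<infinity>" and d_inf: "I0 d = \<infinity>"
    and R_gt: "1 < I0 (\<lambda>a. b a * surv k a + bt a * surv d a)"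
    and R_fin: "I0 (\<lambda>a. b a * surv k a + bt a * surv d a) < \<infinity>"
    and coeffs: "\<eta>1 \<ge> 0" "\<eta>2 \<ge> 0" "c1 \<ge> 0" "c2 \<ge> 0" "ct1 \<ge> 0" "ct2 \<ge> 0"
    and ctot1_pos: "\<eta>1 + c1 > 0"
    and ct2_pos: "ct2 > 0"
    and ctot_ge: "\<eta>1 + c1 \<ge> \<eta>2 + c2"
    and N_nonneg: "N1 \<ge> 0" "N2 \<ge> 0"
    and eq1: "I0 (\<lambda>a. bt a * surv d a * exp (- (ct1 * N1 + ct2 * N2) * a))
              * I0 (\<lambda>a. (k a + (\<eta>1 * N1 + \<eta>2 * N2)) * surv k a
                         * exp (- ((\<eta>1 + c1) * N1 + (\<eta>2 + c2) * N2) * a))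
              + I0 (\<lambda>a. b a * surv k a * exp (- ((\<eta>1 + c1) * N1 + (\<eta>2 + c2) * N2) * a)) = 1"
    and eq2: "ennreal N1 * I0 (\<lambda>a. surv d a * exp (- (ct1 * N1 + ct2 * N2) * a))
              * I0 (\<lambda>a. (k a + (\<eta>1 * N1 + \<eta>2 * N2)) * surv k a
                         * exp (- ((\<eta>1 + c1) * N1 + (\<eta>2 + c2) * N2) * a))
              = ennreal N2 * I0 (\<lambda>a. surv k a * exp (- ((\<eta>1 + c1) * N1 + (\<eta>2 + c2) * N2) * a))"
  shows "N1 + N2 \<ge> Nstar k b (\<eta>1 + c1)"
proof -
  define h where "h = (\<lambda>a. b a * surv k a)"
  interpret Gsetup h
  proof
    have im: "(\<lambda>x. indicator {0..} x *\<^sub>R b x) \<in> borel_measurable lborel"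
      using meas(3) by (simp add: set_borel_measurable_def)
    have "(\<lambda>x. (indicator {0..} x * b x) * surv k x) \<in> borel_measurable lborel"
    proof (rule borel_measurable_times[where f="\<lambda>x. indicator {0..} x * b x"])
      show "(\<lambda>x. indicator {0..} x * b x) \<in> borel_measurable lborel" using im by simp
      show "surv k \<in> borel_measurable lborel" by (rule surv_meas)
    qed
    then show "(\<lambda>a. indicator {0..} a * h a) \<in> borel_measurable lborel"
      by (simp add: h_def mult.assoc)
    show "h a \<ge> 0" if "a \<ge> 0" for a
      using nonneg that surv_nonneg[of k a] by (simp add: h_def)
    have "(\<integral>\<^sup>+ a. ennreal (h a) * indicator {0..} a \<partial>lborel)
        \<le> I0 (\<lambda>a. b a * surv k a + bt a * surv d a)"
      unfolding I0_def h_def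
      using nonneg surv_nonneg
      by (intro nn_integral_mono) (auto simp: indicator_def intro!: ennreal_leI)
    then show "(\<integral>\<^sup>+ a. ennreal (h a) * indicator {0..} a \<partial>lborel) < \<infinity>"
      using R_fin by (meson le_less_trans)
  qed
  define \<mu> where "\<mu> = (\<eta>1 + c1) * N1 + (\<eta>2 + c2) * N2"
  have mu0: "\<mu> \<ge> 0" unfolding \<mu>_def using coeffs N_nonneg ctot1_pos by simp
  have mule: "\<mu> \<le> (\<eta>1 + c1) * (N1 + N2)"
    unfolding \<mu>_def using ctot_ge N_nonneg by (simp add: distrib_left mult_right_mono)
  have "I0 (\<lambda>a. b a * surv k a * exp (- \<mu> * a)) \<le> 1"
    using ennreal_sum_le1[OF eq1[unfolded \<mu>_def[symmetric]]] .
  then have Gmu: "G \<mu> \<le> 1" using I0_G[OF mu0] by (simp add: h_def)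
  show ?thesis
  proof (cases "I0 (\<lambda>a. b a * surv k a) > 1")
    case False
    then show ?thesis using N_nonneg by (simp add: Nstar_def)
  next
    case True
    have "I0 (\<lambda>a. b a * surv k a) = ennreal (G 0)" using I0_G[of 0] by (simp add: h_def)
    with True have G0: "G 0 > 1" by (simp add: ennreal_less_iff)
    have "continuous_on {0..\<mu>} G" using G_cont by (rule continuous_on_subset) auto
    then obtain x where x: "0 \<le> x" "x \<le> \<mu>" "G x = 1"
      using IVT2'[of G \<mu> 1 0] Gmu G0 mu0 by auto
    have xpos: "x > 0" using x G0 by (cases "x = 0") auto
    have the: "(THE \<mu>0. \<mu>0 > 0 \<and> I0 (\<lambda>a. b a * surv k a * exp (- \<mu>0 * a)) = 1) = x"
    proof (rule the_equality)
      show "x > 0 \<and> I0 (\<lambda>a. b a * surv k a * exp (- x * a)) = 1"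
        using xpos x I0_G[of x] by (simp add: h_def)
    next
      fix y assume y: "y > 0 \<and> I0 (\<lambda>a. b a * surv k a * exp (- y * a)) = 1"
      then have Gy: "G y = 1" using I0_G[of y] by (simp add: h_def)
      show "y = x"
      proof (rule ccontr)
        assume "y \<noteq> x"
        then have "y < x \<or> x < y" by auto
        then show False
        proof
          assume "y < x" then have "G x < G y" using G_strict[of y x] y x by simp
          then show False using x Gy by simp
        next
          assume "x < y" then have "G y < G x" using G_strict[of x y] Gy x by simp
          then show False using x Gy by simp
        qed
      qed
    qed
    have "x / (\<eta>1 + c1) \<le> N1 + N2"
      using x mule ctot1_pos by (simp add: divide_le_eq mult.commute)
    then show ?thesis using True the by (simp add: Nstar_def)
  qed
qed

end
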